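(* Let $\mathbb{T}=[0,T]$ with $T\in(0,\infty)$, and suppose $F(\omega^0,\omega^1,m,t)=G(m[0,t])$ for some continuous $G:[0,1]\to\mathbb{R}$ which is differentiable on $(0,1)$. If $F$ satisfies condition (B.2), then $G$ is constant.
   Context: $(\Omega^{\mathrm{com}},\mathcal{F}^{\mathrm{com}},\mathbb{F}^{\mathrm{com}},\mathbb{P}^{\mathrm{com}})$ and $(\Omega^{\mathrm{ind}},\mathcal{F}^{\mathrm{ind}},\mathbb{F}^{\mathrm{ind}},\mathbb{P}^{\mathrm{ind}})$ are filtered probability spaces (filtrations indexed by $\mathbb{T}$); $\Omega^{\mathrm{com}}\times\Omega^{\mathrm{ind}}$ carries $\mathbb{P}^{\mathrm{com}}\times\mathbb{P}^{\mathrm{ind}}$, and $W^0,W^1$ are the coordinate projections. $\mathcal{P}(\mathbb{T})$ is the set of Borel probability measures on $\mathbb{T}$ and $m[0,t]:=m([0,t])$. An $\mathbb{F}^{\mathrm{com}}$-adapted random measure is a $\mathcal{P}(\mathbb{T})$-valued random variable $\mu$ with $\mu[0,t]$ $\mathcal{F}^{\mathrm{com}}_t$-measurable for each $t$ (deterministic measures are such). Condition (B.2): for every pair of $\mathbb{F}^{\mathrm{com}}$-adapted random measures $\mu,\tilde\mu$ with $\mu[0,t]\ge\tilde\mu[0,t]$ for all $t\in\mathbb{T}$ a.s., the process $M_t=F(W^0,W^1,\tilde\mu,t)-F(W^0,W^1,\mu,t)$ is a submartingale. *)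

theory Defs
  imports "HOL-Probability.Probability"
begin

definition borelT :: "real \<Rightarrow> real measure" where
  "borelT T = restrict_space borel {0..T}"

definition filtered_prob_space :: "'a measure \<Rightarrow> (real \<Rightarrow> 'a measure) \<Rightarrow> real \<Rightarrow> bool" where
  "filtered_prob_space M F T \<longleftrightarrow> prob_space M
     \<and> (\<forall>t\<in>{0..T}. subalgebra M (F t))
     \<and> (\<forall>s t. 0 \<le> s \<longrightarrow> s \<le> t \<longrightarrow> t \<le> T \<longrightarrow> sets (F s) \<subseteq> sets (F t))"

definition submartingale ::
    "'a measure \<Rightarrow> (real \<Rightarrow> 'a measure) \<Rightarrow> real \<Rightarrow> (real \<Rightarrow> 'a \<Rightarrow> real) \<Rightarrow> bool" where
  "submartingale M F T X \<longleftrightarrow>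
     (\<forall>t\<in>{0..T}. X t \<in> borel_measurable (F t) \<and> integrable M (X t))
     \<and> (\<forall>s t. 0 \<le> s \<longrightarrow> s \<le> t \<longrightarrow> t \<le> T \<longrightarrow>
          (AE \<omega> in M. X s \<omega> \<le> real_cond_exp M (F s) (X t) \<omega>))"

definition adapted_random_measure ::
    "'a measure \<Rightarrow> (real \<Rightarrow> 'a measure) \<Rightarrow> real \<Rightarrow> ('a \<Rightarrow> real measure) \<Rightarrow> bool" where
  "adapted_random_measure M F T \<mu> \<longleftrightarrow>
     \<mu> \<in> measurable M (subprob_algebra (borelT T))
     \<and> (\<forall>\<omega>\<in>space M. prob_space (\<mu> \<omega>) \<and> sets (\<mu> \<omega>) = sets (borelT T))
     \<and> (\<forall>t\<in>{0..T}. (\<lambda>\<omega>. measure (\<mu> \<omega>) {0..t}) \<in> borel_measurable (F t))"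

text \<open>Condition (B.2). The product space carries the product measure and the product
  filtration (Fc t \<Otimes> Fi t); W0 = fst, W1 = snd are the coordinate projections.\<close>
definition cond_B2 ::
    "'a measure \<Rightarrow> (real \<Rightarrow> 'a measure) \<Rightarrow> 'b measure \<Rightarrow> (real \<Rightarrow> 'b measure) \<Rightarrow> real
     \<Rightarrow> ('a \<Rightarrow> 'b \<Rightarrow> real measure \<Rightarrow> real \<Rightarrow> real) \<Rightarrow> bool" where
  "cond_B2 Mc Fc Mi Fi T F \<longleftrightarrow>
     (\<forall>\<mu> \<mu>'. adapted_random_measure Mc Fc T \<mu> \<longrightarrow> adapted_random_measure Mc Fc T \<mu>' \<longrightarrow>
        (AE \<omega> in Mc. \<forall>t\<in>{0..T}. measure (\<mu> \<omega>) {0..t} \<ge> measure (\<mu>' \<omega>) {0..t}) \<longrightarrow>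
        submartingale (Mc \<Otimes>\<^sub>M Mi) (\<lambda>t. Fc t \<Otimes>\<^sub>M Fi t) T
          (\<lambda>t \<omega>. F (fst \<omega>) (snd \<omega>) (\<mu>' (fst \<omega>)) t - F (fst \<omega>) (snd \<omega>) (\<mu> (fst \<omega>)) t))"

end

theory Submission
  imports Defs
begin

lemma sets_borelT_Icc:
  assumes "0 \<le> t" "t \<le> T" shows "{0..t} \<in> sets (borelT T)"
proof -
  have e: "{0..t} = {0..T} \<inter> {0..t}" using assms by auto
  have "{0..T} \<inter> {0..t} \<in> (\<inter>) {0..T} ` sets (borel :: real measure)"
    by (rule imageI) simp
  then show ?thesis unfolding borelT_def sets_restrict_space e[symmetric] .
qed

lemma space_borelT: "space (borelT T) = {0..T}"
  unfolding borelT_def by (simp add: space_restrict_space)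

lemma const_adapted:
  assumes "prob_space m" "sets m = sets (borelT T)"
  shows "adapted_random_measure Mc Fc T (\<lambda>_. m)"
proof -
  have "m \<in> space (subprob_algebra (borelT T))"
    unfolding space_subprob_algebra using assms prob_space_imp_subprob_space by blast
  then have "(\<lambda>_. m) \<in> measurable Mc (subprob_algebra (borelT T))"
    by (rule measurable_const)
  moreover have "(\<lambda>_. measure m {0..t}) \<in> borel_measurable (Fc t)" for t
    by (rule borel_measurable_const)
  ultimately show ?thesis
    unfolding adapted_random_measure_def using assms by blast
qed

lemma G_eq0:
  fixes Mc :: "'a measure" and Fc :: "real \<Rightarrow> 'a measure"
    and Mi :: "'b measure" and Fi :: "real \<Rightarrow> 'b measure"
    and T :: real and G :: "real \<Rightarrow> real"
    and F :: "'a \<Rightarrow> 'b \<Rightarrow> real measure \<Rightarrow> real \<Rightarrow> real"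
  assumes T: "T > 0"
    and fc: "filtered_prob_space Mc Fc T"
    and fi: "filtered_prob_space Mi Fi T"
    and FG: "\<And>w0 w1 m t. F w0 w1 m t = G (measure m {0..t})"
    and B2: "cond_B2 Mc Fc Mi Fi T F"
    and b: "0 \<le> b" "b \<le> 1"
  shows "G b = G 0"
proof -
  define B where "B = borelT T"
  define f where "f = (\<lambda>c::bool. if c then T/3 else T)"
  define m where "m = distr (measure_pmf (bernoulli_pmf b)) B f"
  define m' where "m' = return B T"
  have spB: "space B = {0..T}" unfolding B_def by (rule space_borelT)
  have fmeas: "f \<in> measurable (measure_pmf (bernoulli_pmf b)) B"
    using T by (auto simp: spB f_def)
  have pm: "prob_space m" unfolding m_def
    by (rule prob_space.prob_space_distr[OF _ fmeas]) (rule prob_space_measure_pmf)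
  have pm': "prob_space m'" unfolding m'_def using T by (intro prob_space_return) (auto simp: spB)
  have sm: "sets m = sets B" "sets m' = sets B" unfolding m_def m'_def by auto
  have mval: "measure m {0..t} = measure_pmf.prob (bernoulli_pmf b) {c. f c \<le> t}"
    if "0 \<le> t" "t \<le> T" for t
  proof -
    have "measure m {0..t} = measure_pmf.prob (bernoulli_pmf b) (f -` {0..t} \<inter> UNIV)"
      unfolding m_def using measure_distr[OF fmeas sets_borelT_Icc[OF that, folded B_def]] by simp
    also have "f -` {0..t} \<inter> UNIV = {c. f c \<le> t}" using T by (auto simp: f_def)
    finally show ?thesis .
  qed
  have m'val: "measure m' {0..t} = (if T \<le> t then 1 else 0)" if "0 \<le> t" "t \<le> T" for t
    unfolding m'_def using measure_return[OF sets_borelT_Icc[OF that, folded B_def]] T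
    by (auto simp: indicator_def)
  have m0: "measure m {0..0} = 0"
  proof -
    have "{c. f c \<le> 0} = {}" using T by (auto simp: f_def)
    then show ?thesis using mval[of 0] T by simp
  qed
  have m3: "measure m {0..T/3} = b"
  proof -
    have "{c. f c \<le> T/3} = {True}" using T by (auto simp: f_def)
    then show ?thesis using mval[of "T/3"] T b by (simp add: measure_pmf_single)
  qed
  have mT: "measure m {0..T} = 1"
  proof -
    have "{c. f c \<le> T} = UNIV" using T by (auto simp: f_def)
    then show ?thesis using mval[of "T"] T by (simp add: measure_pmf.prob_space)
  qed
  have ge: "\<forall>t\<in>{0..T}. measure m {0..t} \<ge> measure m' {0..t}"
  proof
    fix t assume t: "t \<in> {0..T}"
    show "measure m {0..t} \<ge> measure m' {0..t}"
    proof (cases "T \<le> t")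
      case True then have "t = T" using t by auto
      then show ?thesis using mT m'val[of T] T by simp
    qed (use t m'val in auto)
  qed
  have ad: "adapted_random_measure Mc Fc T (\<lambda>_. m)" "adapted_random_measure Mc Fc T (\<lambda>_. m')"
    using const_adapted[OF pm sm(1)[unfolded B_def]] const_adapted[OF pm' sm(2)[unfolded B_def]] by blast+
  have sub: "submartingale (Mc \<Otimes>\<^sub>M Mi) (\<lambda>t. Fc t \<Otimes>\<^sub>M Fi t) T
          (\<lambda>t \<omega>. G (measure m' {0..t}) - G (measure m {0..t}))"
  proof -
    have ae: "AE \<omega> in Mc. \<forall>t\<in>{0..T}. measure m {0..t} \<ge> measure m' {0..t}"
      using ge by (intro AE_I2) simp
    have "submartingale (Mc \<Otimes>\<^sub>M Mi) (\<lambda>t. Fc t \<Otimes>\<^sub>M Fi t) T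
          (\<lambda>t \<omega>. F (fst \<omega>) (snd \<omega>) ((\<lambda>_. m') (fst \<omega>)) t - F (fst \<omega>) (snd \<omega>) ((\<lambda>_. m) (fst \<omega>)) t)"
      by (rule B2[unfolded cond_B2_def, rule_format, OF ad ae])
    then show ?thesis unfolding FG .
  qed
  define X where "X = (\<lambda>t. G (measure m' {0..t}) - G (measure m {0..t}))"
  have pc: "prob_space Mc" "prob_space Mi" using fc fi unfolding filtered_prob_space_def by auto
  interpret Mc: prob_space Mc by (rule pc(1))
  interpret Mi: prob_space Mi by (rule pc(2))
  interpret P: pair_prob_space Mc Mi by unfold_locales
  have step: "X s \<le> X t" if st: "0 \<le> s" "s \<le> t" "t \<le> T" for s t
  proof -
    have subc: "subalgebra Mc (Fc s)" "subalgebra Mi (Fi s)"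
    proof -
      have "s \<in> {0..T}" using st by simp
      moreover have "\<forall>t\<in>{0..T}. subalgebra Mc (Fc t)" "\<forall>t\<in>{0..T}. subalgebra Mi (Fi t)"
        using fc fi unfolding filtered_prob_space_def by blast+
      ultimately show "subalgebra Mc (Fc s)" "subalgebra Mi (Fi s)" by blast+
    qed
    have subalg: "subalgebra (Mc \<Otimes>\<^sub>M Mi) (Fc s \<Otimes>\<^sub>M Fi s)"
      unfolding subalgebra_def
    proof
      show "space (Fc s \<Otimes>\<^sub>M Fi s) = space (Mc \<Otimes>\<^sub>M Mi)"
        using subc by (simp add: space_pair_measure subalgebra_def)
      show "sets (Fc s \<Otimes>\<^sub>M Fi s) \<subseteq> sets (Mc \<Otimes>\<^sub>M Mi)"
      proof (rule sets_pair_in_sets)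
        fix a b assume "a \<in> sets (Fc s)" "b \<in> sets (Fi s)"
        then have "a \<in> sets Mc" "b \<in> sets Mi" using subc unfolding subalgebra_def by blast+
        then show "a \<times> b \<in> sets (Mc \<Otimes>\<^sub>M Mi)" by (rule pair_measureI)
      qed
    qed
    interpret S: sigma_finite_subalgebra "Mc \<Otimes>\<^sub>M Mi" "Fc s \<Otimes>\<^sub>M Fi s"
      by (rule finite_measure_subalgebra_is_sigma_finite)
         (simp add: finite_measure_subalgebra_def finite_measure_subalgebra_axioms_def subalg P.finite_measure_axioms)
    have "AE \<omega> in Mc \<Otimes>\<^sub>M Mi. X s \<le> real_cond_exp (Mc \<Otimes>\<^sub>M Mi) (Fc s \<Otimes>\<^sub>M Fi s) (\<lambda>_. X t) \<omega>"
    proof -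
      have "\<forall>s t. 0 \<le> s \<longrightarrow> s \<le> t \<longrightarrow> t \<le> T \<longrightarrow> (AE \<omega> in Mc \<Otimes>\<^sub>M Mi. X s \<le> real_cond_exp (Mc \<Otimes>\<^sub>M Mi) (Fc s \<Otimes>\<^sub>M Fi s) (\<lambda>_. X t) \<omega>)"
        using sub unfolding submartingale_def X_def by (rule conjunct2)
      then have "AE \<omega> in Mc \<Otimes>\<^sub>M Mi. X s \<le> real_cond_exp (Mc \<Otimes>\<^sub>M Mi) (Fc s \<Otimes>\<^sub>M Fi s) (\<lambda>_. X t) \<omega>"
        using st by blast
      then show ?thesis by (simp add: X_def)
    qed
    moreover have "AE \<omega> in Mc \<Otimes>\<^sub>M Mi. real_cond_exp (Mc \<Otimes>\<^sub>M Mi) (Fc s \<Otimes>\<^sub>M Fi s) (\<lambda>_. X t) \<omega> = X t"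
      by (rule S.real_cond_exp_F_meas[OF P.integrable_const borel_measurable_const])
    ultimately have "AE \<omega> in Mc \<Otimes>\<^sub>M Mi. X s \<le> X t" by eventually_elim auto
    then show ?thesis by simp
  qed
  have "X 0 \<le> X (T/3)" "X (T/3) \<le> X T" using step[of 0 "T/3"] step[of "T/3" T] T by simp_all
  moreover have "measure m' {0..0} = 0" "measure m' {0..T} = 1" "measure m' {0..T/3} = 0"
    using m'val[of 0] m'val[of T] m'val[of "T/3"] T by auto
  then have "X 0 = 0" "X T = 0" "X (T/3) = G 0 - G b"
    unfolding X_def using m0 m3 mT by (simp_all del: atLeastAtMost_singleton)
  ultimately show ?thesis by linarith
qed

theorem mainTheorem5:
  fixes Mc :: "'a measure" and Fc :: "real \<Rightarrow> 'a measure"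
    and Mi :: "'b measure" and Fi :: "real \<Rightarrow> 'b measure"
    and T :: real and G :: "real \<Rightarrow> real"
    and F :: "'a \<Rightarrow> 'b \<Rightarrow> real measure \<Rightarrow> real \<Rightarrow> real"
  assumes "T > 0"
    and "filtered_prob_space Mc Fc T"
    and "filtered_prob_space Mi Fi T"
    and "\<And>w0 w1 m t. F w0 w1 m t = G (measure m {0..t})"
    and "continuous_on {0..1} G"
    and "G differentiable_on {0<..<1}"
    and "cond_B2 Mc Fc Mi Fi T F"
  shows "\<exists>c. \<forall>x\<in>{0..1}. G x = c"
proof (intro exI ballI)
  fix x :: real assume "x \<in> {0..1}"
  then have "0 \<le> x" "x \<le> 1" by auto
  then show "G x = G 0" by (rule G_eq0[OF assms(1,2,3,4,7)])
qed

end
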